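(* Let $G$ be a connected bipartite graph whose bipartition classes have sizes $a\ge1$ and $b\ge1$, let $K$ be a finite field with $q$ elements, and let $X$ be the projective algebraic toric set parameterized by the edges of $G$. Let $X_1$, $X_2$, $X_3$ be the projective tori in $\mathbb{P}^{a-1}$, $\mathbb{P}^{b-1}$, $\mathbb{P}^{a+b-2}$ respectively. Then for every $d\ge1$, $$\delta_{X_1}(d)\,\delta_{X_2}(d)\le\delta_X(d)\le\delta_{X_3}(d).$$
   Context: For $Y$ a subset of the projective torus $\mathbb{T}^{N-1}=\{(y_1:\dots:y_N): y_i\neq0\}\subseteq\mathbb{P}^{N-1}$ over $K$, with $Y=\{P_1,\dots,P_m\}$, the code $C_Y(d)\subseteq K^m$ is the image of the space of degree-$d$ forms in $K[t_1,\dots,t_N]$ under $f\mapsto\big(f(P_1)/t_1^d(P_1),\dots,f(P_m)/t_1^d(P_m)\big)$, and $\delta_Y(d)$ is its minimum distance, i.e. the minimum number of nonzero coordinates of a nonzero vector of $C_Y(d)$. For a graph $G$ with vertices $\{1,\dots,n\}$ and edges $e_1,\dots,e_s$, the projective algebraic toric set parameterized by the edges of $G$ is the image $X\subseteq\mathbb{P}^{s-1}$ of $\mathbb{T}^{n-1}$ under the map whose $k$-th coordinate is $x_ix_j$ when $e_k=\{i,j\}$. *)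

theory Defs
  imports Main
begin

text \<open>Vectors in K^N are functions nat => K vanishing outside {0..<N};
 coordinate t_1 is index 0.\<close>

definition torus_vecs :: "nat \<Rightarrow> (nat \<Rightarrow> 'a::field) set" where
  "torus_vecs N = {y. (\<forall>i<N. y i \<noteq> 0) \<and> (\<forall>i\<ge>N. y i = 0)}"

definition proj_pt :: "(nat \<Rightarrow> 'a::field) \<Rightarrow> (nat \<Rightarrow> 'a) set" where
  "proj_pt y = {(\<lambda>i. c * y i) | c. c \<noteq> 0}"

text \<open>The projective torus T^{N-1} inside P^{N-1}.\<close>
definition proj_torus :: "nat \<Rightarrow> (nat \<Rightarrow> 'a::field) set set" where
  "proj_torus N = proj_pt ` torus_vecs N"

definition mono_exps :: "nat \<Rightarrow> nat \<Rightarrow> (nat \<Rightarrow> nat) set" where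
  "mono_exps N d = {\<alpha>. (\<forall>i\<ge>N. \<alpha> i = 0) \<and> (\<Sum>i<N. \<alpha> i) = d}"

definition eval_form :: "nat \<Rightarrow> nat \<Rightarrow> ((nat \<Rightarrow> nat) \<Rightarrow> 'a::field) \<Rightarrow> (nat \<Rightarrow> 'a) \<Rightarrow> 'a" where
  "eval_form N d c y = (\<Sum>\<alpha>\<in>mono_exps N d. c \<alpha> * (\<Prod>i<N. y i ^ \<alpha> i))"

text \<open>Coordinate of the codeword of f at the projective point P: f(P)/t_1^d(P).\<close>
definition code_val :: "nat \<Rightarrow> nat \<Rightarrow> ((nat \<Rightarrow> nat) \<Rightarrow> 'a::field) \<Rightarrow> (nat \<Rightarrow> 'a) set \<Rightarrow> 'a" where
  "code_val N d c P = (let y = (SOME y. y \<in> P) in eval_form N d c y / (y 0) ^ d)"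

definition min_dist :: "nat \<Rightarrow> nat \<Rightarrow> (nat \<Rightarrow> 'a::field) set set \<Rightarrow> nat" where
  "min_dist N d Y = Min {card {P\<in>Y. code_val N d c P \<noteq> 0} | c. \<exists>P\<in>Y. code_val N d c P \<noteq> 0}"

definition edge_vec :: "nat set list \<Rightarrow> (nat \<Rightarrow> 'a::field) \<Rightarrow> (nat \<Rightarrow> 'a)" where
  "edge_vec E x = (\<lambda>k. if k < length E then (\<Prod>i\<in>E ! k. x i) else 0)"

definition edge_toric_set :: "nat \<Rightarrow> nat set list \<Rightarrow> (nat \<Rightarrow> 'a::field) set set" where
  "edge_toric_set n E = (\<lambda>x. proj_pt (edge_vec E x)) ` torus_vecs n"

definition simple_graph :: "nat \<Rightarrow> nat set list \<Rightarrow> bool" where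
  "simple_graph n E \<longleftrightarrow> distinct E \<and>
     (\<forall>e\<in>set E. \<exists>i j. e = {i, j} \<and> i \<noteq> j \<and> i < n \<and> j < n)"

definition graph_connected :: "nat \<Rightarrow> nat set list \<Rightarrow> bool" where
  "graph_connected n E \<longleftrightarrow>
     (\<forall>u<n. \<forall>v<n. (\<lambda>x y. {x, y} \<in> set E)\<^sup>*\<^sup>* u v)"

definition bipartition :: "nat \<Rightarrow> nat set list \<Rightarrow> nat set \<Rightarrow> bool" where
  "bipartition n E A \<longleftrightarrow> A \<subseteq> {0..<n} \<and>
     (\<forall>e\<in>set E. card (e \<inter> A) = 1)"

end

theory Submission
  imports Defs "HOL-Library.FuncSet"
begin

lemma finite_ext_funs:
  assumes "finite B"
  shows "finite {f::nat \<Rightarrow> 'b. (\<forall>i<N. f i \<in> B) \<and> (\<forall>i\<ge>N. f i = z)}"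
proof -
  have "{f::nat \<Rightarrow> 'b. (\<forall>i<N. f i \<in> B) \<and> (\<forall>i\<ge>N. f i = z)}
     \<subseteq> (\<lambda>g i. if i<N then g i else z) ` PiE {..<N} (\<lambda>_. B)"
  proof
    fix f assume f: "f \<in> {f::nat \<Rightarrow> 'b. (\<forall>i<N. f i \<in> B) \<and> (\<forall>i\<ge>N. f i = z)}"
    then have "f = (\<lambda>i. if i<N then (restrict f {..<N}) i else z)" by (auto simp: not_less)
    moreover have "restrict f {..<N} \<in> PiE {..<N} (\<lambda>_. B)" using f by auto
    ultimately show "f \<in> (\<lambda>g i. if i<N then g i else z) ` PiE {..<N} (\<lambda>_. B)" by blast
  qed
  then show ?thesis by (rule finite_subset) (intro finite_imageI finite_PiE; simp add: assms)
qed

lemma finite_mono_exps: "finite (mono_exps N d)"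
proof -
  have "mono_exps N d \<subseteq> {f. (\<forall>i<N. f i \<in> {0..d}) \<and> (\<forall>i\<ge>N. f i = 0)}"
  proof
    fix f assume f: "f \<in> mono_exps N d"
    have "f i \<le> d" if "i < N" for i
    proof -
      have "f i \<le> (\<Sum>i<N. f i)" using that by (intro member_le_sum) auto
      then show ?thesis using f by (simp add: mono_exps_def)
    qed
    then show "f \<in> {f. (\<forall>i<N. f i \<in> {0..d}) \<and> (\<forall>i\<ge>N. f i = 0)}" using f by (auto simp: mono_exps_def)
  qed
  then show ?thesis by (rule finite_subset) (rule finite_ext_funs, simp)
qed

lemma finite_torus_vecs:
  assumes "finite (UNIV :: 'a::field set)"
  shows "finite (torus_vecs N :: (nat \<Rightarrow> 'a) set)"
proof -
  have "torus_vecs N \<subseteq> {f::nat\<Rightarrow>'a. (\<forall>i<N. f i \<in> UNIV) \<and> (\<forall>i\<ge>N. f i = 0)}"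
    by (auto simp: torus_vecs_def)
  then show ?thesis by (rule finite_subset) (rule finite_ext_funs, rule assms)
qed

definition fs :: "nat \<Rightarrow> nat \<Rightarrow> ((nat \<Rightarrow> 'a::field) \<Rightarrow> 'a) set" where
  "fs N d = {g. \<exists>c. \<forall>y. g y = eval_form N d c y}"

lemma fs_mono:
  assumes "\<alpha> \<in> mono_exps N d"
  shows "(\<lambda>y. \<Prod>i<N. y i ^ \<alpha> i) \<in> fs N d"
proof -
  let ?c = "\<lambda>\<beta>. if \<beta> = \<alpha> then 1 else 0"
  have "eval_form N d ?c y = (\<Prod>i<N. y i ^ \<alpha> i)" for y
  proof -
    have "eval_form N d ?c y = (\<Sum>\<beta>\<in>mono_exps N d. if \<beta> = \<alpha> then (\<Prod>i<N. y i ^ \<beta> i) else 0)"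
      unfolding eval_form_def by (intro sum.cong) auto
    also have "\<dots> = (\<Prod>i<N. y i ^ \<alpha> i)" using assms finite_mono_exps by (simp add: sum.delta)
    finally show ?thesis .
  qed
  then have "\<forall>y. (\<Prod>i<N. y i ^ \<alpha> i) = eval_form N d ?c y" by metis
  then show ?thesis unfolding fs_def by blast
qed

lemma fs_zero: "(\<lambda>y. 0) \<in> fs N d"
  unfolding fs_def eval_form_def by (auto intro!: exI[of _ "\<lambda>_. 0"])

lemma fs_add: assumes "f \<in> fs N d" "g \<in> fs N d" shows "(\<lambda>y. f y + g y) \<in> fs N d"
proof -
  obtain c1 c2 where "\<forall>y. f y = eval_form N d c1 y" "\<forall>y. g y = eval_form N d c2 y"
    using assms unfolding fs_def by blast
  then have "\<forall>y. f y + g y = eval_form N d (\<lambda>\<beta>. c1 \<beta> + c2 \<beta>) y"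
    unfolding eval_form_def by (simp add: sum.distrib distrib_right)
  then show ?thesis unfolding fs_def by blast
qed

lemma fs_smult: assumes "f \<in> fs N d" shows "(\<lambda>y. k * f y) \<in> fs N d"
proof -
  obtain c1 where "\<forall>y. f y = eval_form N d c1 y"
    using assms unfolding fs_def by blast
  then have "\<forall>y. k * f y = eval_form N d (\<lambda>\<beta>. k * c1 \<beta>) y"
    unfolding eval_form_def by (simp add: sum_distrib_left mult.assoc)
  then show ?thesis unfolding fs_def by blast
qed

lemma fs_sum: "finite I \<Longrightarrow> (\<And>i. i \<in> I \<Longrightarrow> g i \<in> fs N d) \<Longrightarrow> (\<lambda>y. \<Sum>i\<in>I. g i y) \<in> fs N d"
proof (induction I rule: finite_induct)
  case empty then show ?case by (simp add: fs_zero)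
next
  case (insert x F) then show ?case by (simp add: fs_add)
qed

lemma fs_eval: "(\<lambda>y. eval_form N d c y) \<in> fs N d"
  unfolding fs_def by auto

lemma eval_homog: "eval_form N d c (\<lambda>i. k * y i) = k ^ d * eval_form N d c y"
proof -
  have "(\<Prod>i<N. (k * y i) ^ \<alpha> i) = k ^ d * (\<Prod>i<N. y i ^ \<alpha> i)" if "\<alpha> \<in> mono_exps N d" for \<alpha>
  proof -
    have "(\<Prod>i<N. (k * y i) ^ \<alpha> i) = (\<Prod>i<N. k ^ \<alpha> i) * (\<Prod>i<N. y i ^ \<alpha> i)"
      by (simp add: power_mult_distrib prod.distrib)
    also have "(\<Prod>i<N. k ^ \<alpha> i) = k ^ (\<Sum>i<N. \<alpha> i)" by (simp add: power_sum)
    also have "(\<Sum>i<N. \<alpha> i) = d" using that unfolding mono_exps_def by simp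
    finally show ?thesis .
  qed
  then show ?thesis unfolding eval_form_def sum_distrib_left
    by (intro sum.cong) (auto simp: mult.left_commute)
qed

lemma fs_homog: assumes "g \<in> fs N d" shows "g (\<lambda>i. k * y i) = k ^ d * g y"
proof -
  obtain c where "\<forall>y. g y = eval_form N d c y" using assms unfolding fs_def by blast
  then show ?thesis using eval_homog by simp
qed

lemma fs_subst:
  assumes p: "\<And>k. k < M \<Longrightarrow> p k < N'" and \<alpha>: "\<alpha> \<in> mono_exps M d"
  shows "(\<lambda>u. \<Prod>k<M. u (p k) ^ \<alpha> k) \<in> fs N' d"
proof -
  define \<beta> where "\<beta> i = (\<Sum>k\<in>{k. k<M \<and> p k = i}. \<alpha> k)" for i
  have grp: "{x \<in> {..<M}. p x = i} = {k. k<M \<and> p k = i}" for i by auto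
  have \<beta>: "\<beta> \<in> mono_exps N' d"
  proof -
    have "\<beta> i = 0" if "i \<ge> N'" for i
    proof -
      have e: "{k. k<M \<and> p k = i} = {}" using p that by fastforce
      show ?thesis unfolding \<beta>_def e by simp
    qed
    moreover have "(\<Sum>i<N'. \<beta> i) = (\<Sum>k<M. \<alpha> k)"
      unfolding \<beta>_def grp[symmetric] by (rule sum.group) (use p in auto)
    ultimately show ?thesis using \<alpha> by (simp add: mono_exps_def)
  qed
  have "(\<Prod>k<M. u (p k) ^ \<alpha> k) = (\<Prod>i<N'. u i ^ \<beta> i)" for u
  proof -
    have "(\<Prod>k<M. u (p k) ^ \<alpha> k) = (\<Prod>i<N'. \<Prod>k\<in>{k. k<M \<and> p k = i}. u (p k) ^ \<alpha> k)"
      unfolding grp[symmetric] by (rule prod.group[symmetric]) (use p in auto)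
    also have "\<dots> = (\<Prod>i<N'. \<Prod>k\<in>{k. k<M \<and> p k = i}. u i ^ \<alpha> k)"
      by (intro prod.cong) auto
    also have "\<dots> = (\<Prod>i<N'. u i ^ \<beta> i)" by (simp add: \<beta>_def power_sum)
    finally show ?thesis .
  qed
  then have eq: "(\<lambda>u. \<Prod>k<M. u (p k) ^ \<alpha> k) = (\<lambda>y. \<Prod>i<N'. y i ^ \<beta> i)" by (rule ext)
  show ?thesis unfolding eq by (rule fs_mono[OF \<beta>])
qed


lemma proj_pt_iff: "z \<in> proj_pt y \<longleftrightarrow> (\<exists>c. c \<noteq> 0 \<and> z = (\<lambda>i. c * y i))"
  unfolding proj_pt_def by blast

lemma proj_pt_self: "y \<in> proj_pt y"
proof -
  have "(1::'a) \<noteq> 0 \<and> y = (\<lambda>i. 1 * y i)" by simp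
  then show ?thesis unfolding proj_pt_iff by blast
qed

lemma proj_pt_scale: assumes "c \<noteq> 0" shows "proj_pt (\<lambda>i. c * y i) = proj_pt y"
proof (rule set_eqI)
  fix z
  show "z \<in> proj_pt (\<lambda>i. c * y i) \<longleftrightarrow> z \<in> proj_pt y"
  proof
    assume "z \<in> proj_pt (\<lambda>i. c * y i)"
    then obtain k where k: "k \<noteq> 0" "z = (\<lambda>i. k * (c * y i))" by (auto simp: proj_pt_iff)
    then have "z = (\<lambda>i. (k * c) * y i)" by (simp add: mult.assoc)
    with k assms show "z \<in> proj_pt y" unfolding proj_pt_iff by (intro exI[of _ "k * c"]) simp
  next
    assume "z \<in> proj_pt y"
    then obtain k where k: "k \<noteq> 0" "z = (\<lambda>i. k * y i)" by (auto simp: proj_pt_iff)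
    then have "z = (\<lambda>i. (k / c) * (c * y i))" using assms by simp
    with k assms show "z \<in> proj_pt (\<lambda>i. c * y i)" unfolding proj_pt_iff by (intro exI[of _ "k / c"]) simp
  qed
qed

lemma proj_pt_eq: assumes "z \<in> proj_pt y" shows "proj_pt z = proj_pt y"
proof -
  obtain c where "c \<noteq> 0" "z = (\<lambda>i. c * y i)" using assms by (auto simp: proj_pt_iff)
  then show ?thesis using proj_pt_scale by simp
qed

lemma card_proj_pt: fixes y :: "nat \<Rightarrow> 'a::field" assumes "y j \<noteq> 0" shows "card (proj_pt y) = card {k::'a::field. k \<noteq> 0}"
proof -
  have "proj_pt y = (\<lambda>c i. c * y i) ` {k. k \<noteq> 0}" by (auto simp: proj_pt_def)
  moreover have "inj_on (\<lambda>c i. c * y i) {k. k \<noteq> 0}"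
  proof (rule inj_onI)
    fix c c' assume "(\<lambda>i. c * y i) = (\<lambda>i. c' * y i)"
    then have "c * y j = c' * y j" by meson
    then show "c = c'" using assms by simp
  qed
  ultimately show ?thesis by (simp add: card_image)
qed

lemma torus_scale: "y \<in> torus_vecs N \<Longrightarrow> c \<noteq> 0 \<Longrightarrow> (\<lambda>i. c * y i) \<in> torus_vecs N"
  by (simp add: torus_vecs_def)

lemma proj_pt_torus: "y \<in> torus_vecs N \<Longrightarrow> proj_pt y \<subseteq> torus_vecs N"
  by (auto simp: proj_pt_iff torus_vecs_def)

lemma code_nz: assumes "y 0 \<noteq> 0"
  shows "code_val N d c (proj_pt y) \<noteq> 0 \<longleftrightarrow> eval_form N d c y \<noteq> 0"
proof -
  define y' where "y' = (SOME y'. y' \<in> proj_pt y)"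
  have "y' \<in> proj_pt y" unfolding y'_def by (rule someI[where x=y]) (rule proj_pt_self)
  then obtain k where k: "k \<noteq> 0" "y' = (\<lambda>i. k * y i)" by (auto simp: proj_pt_iff)
  have "code_val N d c (proj_pt y) = eval_form N d c y' / (y' 0) ^ d"
    unfolding code_val_def y'_def Let_def by simp
  also have "\<dots> = k ^ d * eval_form N d c y / (k * y 0) ^ d" using k by (simp add: eval_homog)
  finally show ?thesis using k assms by simp
qed

lemma finite_proj_torus: "finite (UNIV :: 'a::field set) \<Longrightarrow> finite (proj_torus N :: (nat \<Rightarrow> 'a) set set)"
  unfolding proj_torus_def using finite_torus_vecs by blast

lemma union_classes:
  assumes fin: "finite (UNIV::'a::field set)" and S: "S \<subseteq> (proj_torus N :: (nat \<Rightarrow> 'a) set set)" and N: "N \<ge> 1"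
  shows "card (\<Union>S) = card {k::'a. k \<noteq> 0} * card S"
proof -
  have ft: "finite (torus_vecs N :: (nat\<Rightarrow>'a) set)" using finite_torus_vecs[OF fin] .
  have fS: "finite S" using S finite_proj_torus[OF fin] finite_subset by blast
  have U: "\<Union>S \<subseteq> torus_vecs N" using S proj_pt_torus by (auto simp: proj_torus_def)
  have "card {k::'a. k \<noteq> 0} * card S = card (\<Union>S)"
  proof (rule card_partition[OF fS])
    show "finite (\<Union>S)" using U ft finite_subset by blast
    fix c assume "c \<in> S"
    then obtain y where "y \<in> torus_vecs N" "c = proj_pt y" using S by (auto simp: proj_torus_def)
    moreover then have "y 0 \<noteq> 0" using N by (simp add: torus_vecs_def)
    ultimately show "card c = card {k::'a. k \<noteq> 0}" using card_proj_pt by simp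
  next
    fix c1 c2 assume c: "c1 \<in> S" "c2 \<in> S" "c1 \<noteq> c2"
    show "c1 \<inter> c2 = {}"
    proof (rule ccontr)
      assume "c1 \<inter> c2 \<noteq> {}"
      then obtain x where x: "x \<in> c1" "x \<in> c2" by blast
      obtain y1 where "c1 = proj_pt y1" using c(1) S unfolding proj_torus_def by blast
      moreover obtain y2 where "c2 = proj_pt y2" using c(2) S unfolding proj_torus_def by blast
      ultimately have "c1 = proj_pt x" "c2 = proj_pt x" using x proj_pt_eq by auto
      then show False using c by simp
    qed
  qed
  then show ?thesis by simp
qed

lemma card_torus_vecs:
  assumes fin: "finite (UNIV::'a::field set)"
  shows "card (torus_vecs N :: (nat \<Rightarrow> 'a) set) = card {k::'a. k \<noteq> 0} ^ N"
proof -
  let ?e = "\<lambda>g::nat\<Rightarrow>'a. \<lambda>i. if i < N then g i else 0"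
  have eq: "torus_vecs N = ?e ` PiE {..<N} (\<lambda>_. {k::'a. k \<noteq> 0})"
  proof
    show "torus_vecs N \<subseteq> ?e ` PiE {..<N} (\<lambda>_. {k::'a. k \<noteq> 0})"
    proof
      fix y :: "nat \<Rightarrow> 'a" assume y: "y \<in> torus_vecs N"
      then have "y = ?e (restrict y {..<N})" by (auto simp: torus_vecs_def not_less)
      moreover have "restrict y {..<N} \<in> PiE {..<N} (\<lambda>_. {k::'a. k \<noteq> 0})" using y
        by (auto simp: torus_vecs_def)
      ultimately show "y \<in> ?e ` PiE {..<N} (\<lambda>_. {k::'a. k \<noteq> 0})" by blast
    qed
    show "?e ` PiE {..<N} (\<lambda>_. {k::'a. k \<noteq> 0}) \<subseteq> torus_vecs N"
      by (auto simp: torus_vecs_def PiE_def Pi_def)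
  qed
  have inj: "inj_on ?e (PiE {..<N} (\<lambda>_. {k::'a. k \<noteq> 0}))"
  proof (rule inj_onI)
    fix g h assume g: "g \<in> PiE {..<N} (\<lambda>_. {k::'a. k \<noteq> 0})" and h: "h \<in> PiE {..<N} (\<lambda>_. {k::'a. k \<noteq> 0})"
      and e: "?e g = ?e h"
    show "g = h"
    proof (rule PiE_ext[OF g h])
      fix i assume "i \<in> {..<N}"
      then show "g i = h i" using fun_cong[OF e, of i] by simp
    qed
  qed
  show ?thesis unfolding eq card_image[OF inj] by (simp add: card_PiE)
qed

lemma card_proj_torus:
  assumes fin: "finite (UNIV::'a::field set)" and N: "N \<ge> 1"
  shows "card {k::'a. k \<noteq> 0} * card (proj_torus N :: (nat \<Rightarrow> 'a) set set) = card {k::'a. k \<noteq> 0} ^ N"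
proof -
  have "\<Union>(proj_torus N :: (nat \<Rightarrow> 'a) set set) = torus_vecs N"
    using proj_pt_torus proj_pt_self by (fastforce simp: proj_torus_def)
  then show ?thesis using union_classes[OF fin _ N, of "proj_torus N"] card_torus_vecs[OF fin] by simp
qed

lemma weight_vec:
  assumes fin: "finite (UNIV::'a::field set)" and N: "N \<ge> 1"
  shows "card {y \<in> (torus_vecs N :: (nat \<Rightarrow> 'a) set). eval_form N d c y \<noteq> 0}
       = card {k::'a. k \<noteq> 0} * card {P \<in> proj_torus N. code_val N d c P \<noteq> 0}"
proof -
  have "{y \<in> (torus_vecs N :: (nat \<Rightarrow> 'a) set). eval_form N d c y \<noteq> 0} = \<Union>{P \<in> proj_torus N. code_val N d c P \<noteq> 0}"
  proof
    show "{y \<in> (torus_vecs N :: (nat \<Rightarrow> 'a) set). eval_form N d c y \<noteq> 0} \<subseteq> \<Union>{P \<in> proj_torus N. code_val N d c P \<noteq> 0}"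
    proof
      fix y :: "nat \<Rightarrow> 'a" assume y: "y \<in> {y \<in> torus_vecs N. eval_form N d c y \<noteq> 0}"
      then have "y 0 \<noteq> 0" using N by (simp add: torus_vecs_def)
      then have "code_val N d c (proj_pt y) \<noteq> 0" using y code_nz by blast
      moreover have "proj_pt y \<in> proj_torus N" using y by (simp add: proj_torus_def)
      ultimately show "y \<in> \<Union>{P \<in> proj_torus N. code_val N d c P \<noteq> 0}" using proj_pt_self by blast
    qed
    show "\<Union>{P \<in> proj_torus N. code_val N d c P \<noteq> 0} \<subseteq> {y \<in> (torus_vecs N :: (nat \<Rightarrow> 'a) set). eval_form N d c y \<noteq> 0}"
    proof
      fix y :: "nat \<Rightarrow> 'a" assume "y \<in> \<Union>{P \<in> proj_torus N. code_val N d c P \<noteq> 0}"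
      then obtain y' where y': "y' \<in> torus_vecs N" "y \<in> proj_pt y'" "code_val N d c (proj_pt y') \<noteq> 0"
        by (auto simp: proj_torus_def)
      then have "y' 0 \<noteq> 0" using N by (simp add: torus_vecs_def)
      then have ne: "eval_form N d c y' \<noteq> 0" using y' code_nz by blast
      obtain k where k: "k \<noteq> 0" "y = (\<lambda>i. k * y' i)" using y' by (auto simp: proj_pt_iff)
      show "y \<in> {y \<in> (torus_vecs N :: (nat \<Rightarrow> 'a) set). eval_form N d c y \<noteq> 0}"
        using k ne y' by (simp add: torus_scale eval_homog)
    qed
  qed
  then show ?thesis using union_classes[OF fin _ N, of "{P \<in> proj_torus N. code_val N d c P \<noteq> 0}"] by simp
qed


definition wset :: "nat \<Rightarrow> nat \<Rightarrow> (nat \<Rightarrow> 'a::field) set set \<Rightarrow> nat set" where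
  "wset N d Y = {card {P\<in>Y. code_val N d c P \<noteq> 0} | c. \<exists>P\<in>Y. code_val N d c P \<noteq> 0}"

lemma min_dist_wset: "min_dist N d Y = Min (wset N d Y)"
  by (simp add: min_dist_def wset_def)

lemma wset_finite: assumes "finite Y" shows "finite (wset N d Y)"
proof -
  have "wset N d Y \<subseteq> {..card Y}" unfolding wset_def using assms by (auto intro: card_mono)
  then show ?thesis using finite_subset by blast
qed

lemma wset_nonempty:
  fixes Y :: "(nat \<Rightarrow> 'a::field) set set"
  assumes N: "N \<ge> 1" and ne: "Y \<noteq> {}" and rep: "\<And>P. P \<in> Y \<Longrightarrow> \<exists>y. P = proj_pt y \<and> y 0 \<noteq> 0"
  shows "wset N d Y \<noteq> {}"
proof -
  define \<alpha> where "\<alpha> = (\<lambda>i::nat. if i = 0 then d else 0)"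
  have \<alpha>: "\<alpha> \<in> mono_exps N d" using N by (auto simp: mono_exps_def \<alpha>_def)
  obtain c where c: "\<forall>y. (\<Prod>i<N. y i ^ \<alpha> i) = eval_form N d c (y :: nat \<Rightarrow> 'a)"
    using fs_mono[OF \<alpha>] unfolding fs_def by blast
  have m: "(\<Prod>i<N. y i ^ \<alpha> i) = y 0 ^ d" for y :: "nat \<Rightarrow> 'a"
  proof -
    have "(\<Prod>i<N. y i ^ \<alpha> i) = (\<Prod>i<N. if i = 0 then y i ^ d else 1)" by (intro prod.cong) (auto simp: \<alpha>_def)
    also have "\<dots> = y 0 ^ d" using N by (simp add: prod.delta)
    finally show ?thesis .
  qed
  obtain P where P: "P \<in> Y" using ne by blast
  then obtain y where y: "P = proj_pt y" "y 0 \<noteq> 0" using rep by blast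
  have "eval_form N d c y = y 0 ^ d" using spec[OF c, of y] m[of y] by simp
  then have "eval_form N d c y \<noteq> 0" using y by simp
  then have "code_val N d c P \<noteq> 0" using code_nz y by blast
  then show ?thesis unfolding wset_def using P by blast
qed

lemma md_le:
  assumes "finite Y" "P \<in> Y" "code_val N d c P \<noteq> 0"
  shows "min_dist N d Y \<le> card {P\<in>Y. code_val N d c P \<noteq> 0}"
  unfolding min_dist_wset
  by (rule Min_le[OF wset_finite[OF assms(1)]]) (use assms in \<open>auto simp: wset_def\<close>)

lemma md_in:
  assumes "finite Y" "wset N d Y \<noteq> {}"
  shows "\<exists>c. (\<exists>P\<in>Y. code_val N d c P \<noteq> 0) \<and> min_dist N d Y = card {P\<in>Y. code_val N d c P \<noteq> 0}"
proof -
  have "Min (wset N d Y) \<in> wset N d Y" by (rule Min_in[OF wset_finite[OF assms(1)] assms(2)])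
  then show ?thesis unfolding min_dist_wset wset_def by auto
qed

lemma md_ge:
  assumes "finite Y" "wset N d Y \<noteq> {}"
    and "\<And>c. \<exists>P\<in>Y. code_val N d c P \<noteq> 0 \<Longrightarrow> m \<le> card {P\<in>Y. code_val N d c P \<noteq> 0}"
  shows "m \<le> min_dist N d Y"
proof -
  obtain c where "\<exists>P\<in>Y. code_val N d c P \<noteq> 0" "min_dist N d Y = card {P\<in>Y. code_val N d c P \<noteq> 0}"
    using md_in[OF assms(1,2)] by blast
  then show ?thesis using assms(3) by simp
qed

lemma torus_lb:
  fixes g :: "(nat \<Rightarrow> 'a::field) \<Rightarrow> 'a"
  assumes fin: "finite (UNIV::'a set)" and N: "N \<ge> 1" and g: "g \<in> fs N d"
    and y0: "y0 \<in> torus_vecs N" "g y0 \<noteq> 0"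
  shows "card {k::'a. k \<noteq> 0} * min_dist N d (proj_torus N :: (nat \<Rightarrow> 'a) set set)
         \<le> card {y \<in> torus_vecs N. g y \<noteq> 0}"
proof -
  obtain c where c: "\<forall>y. g y = eval_form N d c y" using g unfolding fs_def by blast
  have y00: "y0 0 \<noteq> 0" using y0 N by (simp add: torus_vecs_def)
  have "eval_form N d c y0 \<noteq> 0" using c y0 by simp
  then have "code_val N d c (proj_pt y0) \<noteq> 0" using code_nz[of y0, OF y00] by blast
  moreover have "proj_pt y0 \<in> proj_torus N" using y0 by (simp add: proj_torus_def)
  ultimately have "min_dist N d (proj_torus N :: (nat \<Rightarrow> 'a) set set) \<le> card {P \<in> proj_torus N. code_val N d c P \<noteq> 0}"
    using md_le finite_proj_torus[OF fin] by blast
  then have "card {k::'a. k \<noteq> 0} * min_dist N d (proj_torus N :: (nat \<Rightarrow> 'a) set set)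
     \<le> card {k::'a. k \<noteq> 0} * card {P \<in> proj_torus N. code_val N d c P \<noteq> 0}" by simp
  also have "\<dots> = card {y \<in> torus_vecs N. eval_form N d c y \<noteq> 0}" using weight_vec[OF fin N] by simp
  also have "{y \<in> torus_vecs N. eval_form N d c y \<noteq> 0} = {y \<in> torus_vecs N. g y \<noteq> 0}" using c by simp
  finally show ?thesis .
qed

lemma crossing:
  assumes "R\<^sup>*\<^sup>* w v" "w \<in> S" "v \<notin> S"
  shows "\<exists>x y. R x y \<and> x \<in> S \<and> y \<notin> S"
  using assms
proof (induction rule: rtranclp_induct)
  case base then show ?case by simp
next
  case (step y z)
  show ?case
  proof (cases "y \<in> S")
    case True then show ?thesis using step by blast
  next
    case False then show ?thesis using step by blast
  qed
qed


locale bip =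
  fixes n :: nat and E :: "nat set list" and A :: "nat set"
  assumes sg: "simple_graph n E" and conn: "graph_connected n E" and bp: "bipartition n E A"
    and Ane: "A \<noteq> {}" and Bne: "{0..<n} - A \<noteq> {}"
begin

definition Bv where "Bv = {0..<n} - A"

lemma A_sub: "A \<subseteq> {0..<n}" using bp by (simp add: bipartition_def)
lemma finA: "finite A" using A_sub finite_subset by blast
lemma finB: "finite Bv" by (simp add: Bv_def)

lemma edge_AB: assumes "e \<in> set E" shows "\<exists>i j. e = {i,j} \<and> i \<in> A \<and> j \<notin> A \<and> i < n \<and> j < n"
proof -
  obtain i j where ij: "e = {i,j}" "i \<noteq> j" "i<n" "j<n" using sg assms unfolding simple_graph_def by blast
  have c1: "card (e \<inter> A) = 1" using bp assms by (simp add: bipartition_def)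
  show ?thesis
  proof (cases "i \<in> A")
    case True
    have "j \<notin> A"
    proof
      assume "j \<in> A" then have "e \<inter> A = {i,j}" using True ij by auto
      then show False using c1 ij by simp
    qed
    then show ?thesis using True ij by blast
  next
    case False
    have "j \<in> A"
    proof (rule ccontr)
      assume "j \<notin> A" then have "e \<inter> A = {}" using False ij by auto
      then show False using c1 by simp
    qed
    moreover have "e = {j, i}" using ij by auto
    ultimately show ?thesis using False ij by blast
  qed
qed

definition pA where "pA k = (SOME i. i \<in> E!k \<and> i \<in> A)"
definition pB where "pB k = (SOME j. j \<in> E!k \<and> j \<notin> A)"

lemma pAB: assumes "k < length E"
  shows "E!k = {pA k, pB k}" "pA k \<in> A" "pB k \<notin> A" "pA k < n" "pB k < n" "pA k \<noteq> pB k"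
proof -
  obtain i j where ij: "E!k = {i,j}" "i\<in>A" "j\<notin>A" "i<n" "j<n" using edge_AB[of "E!k"] assms nth_mem by blast
  have "pA k = i" unfolding pA_def by (rule some_equality) (use ij in auto)
  moreover have "pB k = j" unfolding pB_def by (rule some_equality) (use ij in auto)
  ultimately show "E!k = {pA k, pB k}" "pA k \<in> A" "pB k \<notin> A" "pA k < n" "pB k < n" "pA k \<noteq> pB k"
    using ij by auto
qed

definition \<sigma> where "\<sigma> = (SOME h. bij_betw h {0..<card A} A)"
definition \<tau> where "\<tau> = (SOME h. bij_betw h {0..<card Bv} Bv)"
definition \<sigma>i where "\<sigma>i = inv_into {0..<card A} \<sigma>"
definition \<tau>i where "\<tau>i = inv_into {0..<card Bv} \<tau>"

lemma \<sigma>_bij: "bij_betw \<sigma> {0..<card A} A"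
  using ex_bij_betw_nat_finite[OF finA] unfolding \<sigma>_def by (rule someI_ex)
lemma \<tau>_bij: "bij_betw \<tau> {0..<card Bv} Bv"
  using ex_bij_betw_nat_finite[OF finB] unfolding \<tau>_def by (rule someI_ex)

lemma \<sigma>1: assumes "i \<in> A" shows "\<sigma>i i < card A" "\<sigma> (\<sigma>i i) = i"
proof -
  have "i \<in> \<sigma> ` {0..<card A}" using \<sigma>_bij assms by (simp add: bij_betw_def)
  then have "\<sigma>i i \<in> {0..<card A}" unfolding \<sigma>i_def by (rule inv_into_into)
  then show "\<sigma>i i < card A" by simp
  show "\<sigma> (\<sigma>i i) = i" unfolding \<sigma>i_def using bij_betw_inv_into_right[OF \<sigma>_bij assms] .
qed
lemma \<sigma>2: assumes "m < card A" shows "\<sigma> m \<in> A" "\<sigma>i (\<sigma> m) = m"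
  using bij_betw_apply[OF \<sigma>_bij] bij_betw_inv_into_left[OF \<sigma>_bij] assms unfolding \<sigma>i_def by auto
lemma \<tau>1: assumes "i \<in> Bv" shows "\<tau>i i < card Bv" "\<tau> (\<tau>i i) = i"
proof -
  have "i \<in> \<tau> ` {0..<card Bv}" using \<tau>_bij assms by (simp add: bij_betw_def)
  then have "\<tau>i i \<in> {0..<card Bv}" unfolding \<tau>i_def by (rule inv_into_into)
  then show "\<tau>i i < card Bv" by simp
  show "\<tau> (\<tau>i i) = i" unfolding \<tau>i_def using bij_betw_inv_into_right[OF \<tau>_bij assms] .
qed
lemma \<tau>2: assumes "m < card Bv" shows "\<tau> m \<in> Bv" "\<tau>i (\<tau> m) = m"
  using bij_betw_apply[OF \<tau>_bij] bij_betw_inv_into_left[OF \<tau>_bij] assms unfolding \<tau>i_def by auto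

definition z :: "(nat \<Rightarrow> 'a::field) \<Rightarrow> (nat \<Rightarrow> 'a) \<Rightarrow> nat \<Rightarrow> 'a" where
  "z u v i = (if i < n then (if i \<in> A then u (\<sigma>i i) else v (\<tau>i i)) else 0)"

lemma z_torus: assumes "u \<in> torus_vecs (card A)" "v \<in> torus_vecs (card Bv)"
  shows "z u v \<in> torus_vecs n"
proof -
  have "z u v i \<noteq> 0" if "i < n" for i
  proof (cases "i \<in> A")
    case True then show ?thesis using that assms \<sigma>1 by (simp add: z_def torus_vecs_def)
  next
    case False then have "i \<in> Bv" using that by (simp add: Bv_def)
    then show ?thesis using False that assms \<tau>1 by (simp add: z_def torus_vecs_def)
  qed
  then show ?thesis by (simp add: torus_vecs_def z_def)
qed

definition p1 where "p1 k = \<sigma>i (pA k)"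
definition p2 where "p2 k = \<tau>i (pB k)"

lemma p1_lt: "k < length E \<Longrightarrow> p1 k < card A"
  unfolding p1_def using pAB \<sigma>1 by blast
lemma p2_lt: assumes "k < length E" shows "p2 k < card Bv"
proof -
  have "pB k \<in> Bv" using pAB[OF assms] by (simp add: Bv_def)
  then show ?thesis unfolding p2_def using \<tau>1 by blast
qed

lemma edge_z: assumes "k < length E" shows "(\<Prod>i\<in>E!k. z u v i) = u (p1 k) * v (p2 k)"
proof -
  have "(\<Prod>i\<in>E!k. z u v i) = z u v (pA k) * z u v (pB k)" using pAB[OF assms] by simp
  then show ?thesis using pAB[OF assms] by (simp add: z_def p1_def p2_def)
qed

definition G :: "nat \<Rightarrow> ((nat \<Rightarrow> nat) \<Rightarrow> 'a::field) \<Rightarrow> (nat \<Rightarrow> 'a) \<Rightarrow> (nat \<Rightarrow> 'a) \<Rightarrow> 'a" where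
  "G d c u v = eval_form (length E) d c (edge_vec E (z u v))"

lemma G_split: "G d c u v = (\<Sum>\<alpha>\<in>mono_exps (length E) d.
    c \<alpha> * ((\<Prod>k<length E. u (p1 k) ^ \<alpha> k) * (\<Prod>k<length E. v (p2 k) ^ \<alpha> k)))"
  unfolding G_def eval_form_def
proof (intro sum.cong refl arg_cong2[where f="(*)"])
  fix \<alpha>
  have "(\<Prod>k<length E. edge_vec E (z u v) k ^ \<alpha> k) = (\<Prod>k<length E. (u (p1 k) * v (p2 k)) ^ \<alpha> k)"
    by (intro prod.cong refl) (simp add: edge_vec_def edge_z)
  then show "(\<Prod>k<length E. edge_vec E (z u v) k ^ \<alpha> k)
      = (\<Prod>k<length E. u (p1 k) ^ \<alpha> k) * (\<Prod>k<length E. v (p2 k) ^ \<alpha> k)"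
    by (simp add: power_mult_distrib prod.distrib)
qed

lemma G_fs_u: "(\<lambda>u. G d c u v) \<in> fs (card A) d"
proof -
  have "(\<lambda>u. G d c u v) = (\<lambda>u. \<Sum>\<alpha>\<in>mono_exps (length E) d.
      (c \<alpha> * (\<Prod>k<length E. v (p2 k) ^ \<alpha> k)) * (\<Prod>k<length E. u (p1 k) ^ \<alpha> k))"
    by (simp add: G_split mult_ac)
  also have "\<dots> \<in> fs (card A) d"
    by (intro fs_sum finite_mono_exps fs_smult fs_subst p1_lt)
  finally show ?thesis .
qed

lemma G_fs_v: "(\<lambda>v. G d c u v) \<in> fs (card Bv) d"
proof -
  have "(\<lambda>v. G d c u v) = (\<lambda>v. \<Sum>\<alpha>\<in>mono_exps (length E) d.
      (c \<alpha> * (\<Prod>k<length E. u (p1 k) ^ \<alpha> k)) * (\<Prod>k<length E. v (p2 k) ^ \<alpha> k))"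
    by (simp add: G_split mult_ac)
  also have "\<dots> \<in> fs (card Bv) d"
    by (intro fs_sum finite_mono_exps fs_smult fs_subst p2_lt)
  finally show ?thesis .
qed


lemma ratio:
  fixes r :: "nat \<Rightarrow> 'a::field"
  assumes F: "F \<subseteq> set E" and w0: "w0 \<in> A" and reach: "(\<lambda>x y. {x,y} \<in> F)\<^sup>*\<^sup>* w0 v"
    and r: "\<And>x y. {x,y} \<in> F \<Longrightarrow> r x * r y = c" and c: "c \<noteq> 0" and l: "r w0 \<noteq> 0"
  shows "r v = (if v \<in> A then r w0 else c / r w0)"
  using reach
proof (induction rule: rtranclp_induct)
  case base then show ?case using w0 by simp
next
  case (step x y)
  have e: "{x,y} \<in> set E" using step(2) F by auto
  obtain i j where ij: "{x,y} = {i,j}" "i \<in> A" "j \<notin> A" using edge_AB[OF e] by blast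
  have xy: "(x \<in> A \<and> y \<notin> A) \<or> (x \<notin> A \<and> y \<in> A)" using ij by (auto simp: doubleton_eq_iff)
  have rxy: "r x * r y = c" using r step(2) by blast
  show ?case
  proof (cases "x \<in> A")
    case True
    with xy have yA: "y \<notin> A" by blast
    have "r x = r w0" using step(3) True by simp
    then have "r y = c / r w0" using rxy l by (simp add: eq_divide_eq mult.commute)
    then show ?thesis using yA by simp
  next
    case False
    with xy have yA: "y \<in> A" by blast
    have "r x = c / r w0" using step(3) False by simp
    then have "c / r w0 * r y = c" using rxy by simp
    then have "r y = r w0" using l c by (simp add: field_simps)
    then show ?thesis using yA by simp
  qed
qed

lemma scale_conn:
  fixes x1 x2 :: "nat \<Rightarrow> 'a::field"
  assumes x: "x1 \<in> torus_vecs n" "x2 \<in> torus_vecs n" and F: "F \<subseteq> set E" and w0: "w0 \<in> A"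
    and reach: "\<And>v. v < n \<Longrightarrow> (\<lambda>x y. {x,y} \<in> F)\<^sup>*\<^sup>* w0 v" and c: "c \<noteq> 0"
    and h: "\<And>e. e \<in> F \<Longrightarrow> (\<Prod>i\<in>e. x1 i) = c * (\<Prod>i\<in>e. x2 i)"
  shows "\<exists>l. l \<noteq> 0 \<and> (\<forall>i<n. x1 i = (if i \<in> A then l else c / l) * x2 i)"
proof -
  define r where "r i = x1 i / x2 i" for i
  have w0n: "w0 < n" using w0 A_sub by auto
  have nz: "\<And>i. i<n \<Longrightarrow> x1 i \<noteq> 0 \<and> x2 i \<noteq> 0" using x by (simp add: torus_vecs_def)
  have rr: "r x * r y = c" if "{x,y} \<in> F" for x y
  proof -
    have e: "{x,y} \<in> set E" using that F by blast
    obtain i j where ij: "{x,y} = {i,j}" "i\<in>A" "j\<notin>A" "i<n" "j<n" using edge_AB[OF e] by blast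
    have xy: "x \<noteq> y" "x < n" "y < n"
    proof -
      have "(x = i \<and> y = j) \<or> (x = j \<and> y = i)" using ij(1) by (simp add: doubleton_eq_iff)
      then show "x \<noteq> y" "x < n" "y < n" using ij by auto
    qed
    then have "x1 x * x1 y = c * (x2 x * x2 y)" using h[OF that] by simp
    moreover have "x2 x * x2 y \<noteq> 0" using nz xy by simp
    moreover have "r x * r y = (x1 x * x1 y) / (x2 x * x2 y)" by (simp add: r_def)
    ultimately show ?thesis by simp
  qed
  have l: "r w0 \<noteq> 0" using nz w0n by (simp add: r_def)
  have "x1 i = (if i \<in> A then r w0 else c / r w0) * x2 i" if "i < n" for i
  proof -
    have ri: "r i = (if i \<in> A then r w0 else c / r w0)" by (rule ratio[of F w0 i r c, OF F w0 reach[OF that] rr c l])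
    have "x1 i = r i * x2 i" using nz[OF that] by (simp add: r_def)
    then show ?thesis using ri by simp
  qed
  then show ?thesis using l by blast
qed

lemma edges_scale:
  fixes x1 x2 :: "nat \<Rightarrow> 'a::field"
  assumes "l \<noteq> 0" "\<forall>i<n. x1 i = (if i \<in> A then l else c / l) * x2 i"
  shows "edge_vec E x1 = (\<lambda>k. c * edge_vec E x2 k)"
proof
  fix k show "edge_vec E x1 k = c * edge_vec E x2 k"
  proof (cases "k < length E")
    case True
    note p = pAB[OF True]
    have "edge_vec E x1 k = x1 (pA k) * x1 (pB k)" using True p by (simp add: edge_vec_def)
    also have "\<dots> = (l * x2 (pA k)) * ((c / l) * x2 (pB k))" using assms p by simp
    also have "\<dots> = c * (x2 (pA k) * x2 (pB k))" using assms(1) by (simp add: field_simps)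
    also have "\<dots> = c * edge_vec E x2 k" using True p by (simp add: edge_vec_def)
    finally show ?thesis .
  qed (simp add: edge_vec_def)
qed

lemma E_ne: "length E \<ge> 1"
proof -
  obtain i where i: "i \<in> A" using Ane by blast
  obtain j where "j \<in> {0..<n} - A" using Bne by blast
  then have j: "j < n" "j \<notin> A" by auto
  have "(\<lambda>x y. {x,y} \<in> set E)\<^sup>*\<^sup>* i j" using conn i j A_sub unfolding graph_connected_def by auto
  then obtain x y where "{x,y} \<in> set E" using crossing[of _ i j A] i j by blast
  then show ?thesis by (cases E) auto
qed

lemma ev_nz: assumes "y \<in> torus_vecs n" "k < length E" shows "edge_vec E y k \<noteq> 0"
  using pAB[OF assms(2)] assms by (simp add: edge_vec_def torus_vecs_def)

lemma ev0: "y \<in> torus_vecs n \<Longrightarrow> edge_vec E y 0 \<noteq> 0"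
  using ev_nz[of y 0] E_ne by (simp add: Suc_le_eq)

definition fib :: "(nat \<Rightarrow> 'a::field) set \<Rightarrow> ((nat \<Rightarrow> 'a) \<times> (nat \<Rightarrow> 'a)) set" where
  "fib P = {(v,u). v \<in> torus_vecs (card Bv) \<and> u \<in> torus_vecs (card A) \<and> proj_pt (edge_vec E (z u v)) = P}"

lemma fib_sub: "fib P \<subseteq> torus_vecs (card Bv) \<times> torus_vecs (card A)"
  by (auto simp: fib_def)

lemma fib_card:
  assumes fin: "finite (UNIV::'a::field set)"
  shows "card (fib P :: ((nat\<Rightarrow>'a) \<times> (nat\<Rightarrow>'a)) set) \<le> card {k::'a. k\<noteq>0} * card {k::'a. k\<noteq>0}"
proof (cases "fib P = {}")
  case True thus ?thesis by simp
next
  case False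
  then obtain v0 u0 where p0: "(v0,u0) \<in> fib P" by auto
  let ?K = "{k::'a. k \<noteq> 0}"
  let ?f = "\<lambda>(l,m). ((\<lambda>i. m * v0 i), (\<lambda>i::nat. l * u0 i))"
  have vu0: "v0 \<in> torus_vecs (card Bv)" "u0 \<in> torus_vecs (card A)" "proj_pt (edge_vec E (z u0 v0)) = P"
    using p0 by (auto simp: fib_def)
  obtain w0 where w0: "w0 \<in> A" using Ane by blast
  have reach: "(\<lambda>x y. {x,y} \<in> set E)\<^sup>*\<^sup>* w0 v'" if "v' < n" for v'
    using conn w0 A_sub that unfolding graph_connected_def by auto
  have sub: "fib P \<subseteq> ?f ` (?K \<times> ?K)"
  proof
    fix p assume p: "p \<in> fib P"
    obtain v u where pvu: "p = (v,u)" by (cases p)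
    have vu: "v \<in> torus_vecs (card Bv)" "u \<in> torus_vecs (card A)" "proj_pt (edge_vec E (z u v)) = P"
      using p pvu by (auto simp: fib_def)
    have "edge_vec E (z u v) \<in> proj_pt (edge_vec E (z u v))" by (rule proj_pt_self)
    then have "edge_vec E (z u v) \<in> proj_pt (edge_vec E (z u0 v0))"
      using vu(3) vu0(3) by simp
    then obtain c where c: "c \<noteq> 0" "edge_vec E (z u v) = (\<lambda>k. c * edge_vec E (z u0 v0) k)"
      unfolding proj_pt_iff by blast
    have h: "(\<Prod>i\<in>e. z u v i) = c * (\<Prod>i\<in>e. z u0 v0 i)" if "e \<in> set E" for e
    proof -
      have "\<exists>k<length E. E!k = e" using in_set_conv_nth[THEN iffD1, OF that] .
      then obtain k where k: "k < length E" "E!k = e" by blast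
      have ev: "edge_vec E w k = (\<Prod>i\<in>e. w i)" for w :: "nat \<Rightarrow> 'a"
        using k unfolding edge_vec_def by simp
      have "edge_vec E (z u v) k = c * edge_vec E (z u0 v0) k" by (subst c(2)) (rule refl)
      then show ?thesis unfolding ev .
    qed
    obtain l where l: "l \<noteq> 0" "\<forall>i<n. z u v i = (if i \<in> A then l else c / l) * z u0 v0 i"
      using scale_conn[OF z_torus[OF vu(2,1)] z_torus[OF vu0(2,1)] subset_refl w0 reach c(1) h] by blast
    have ueq: "u = (\<lambda>i. l * u0 i)"
    proof
      fix m show "u m = l * u0 m"
      proof (cases "m < card A")
        case True
        have s: "\<sigma> m \<in> A" "\<sigma>i (\<sigma> m) = m" using \<sigma>2[OF True] by auto
        then have "\<sigma> m < n" using A_sub by auto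
        then have "z u v (\<sigma> m) = l * z u0 v0 (\<sigma> m)" using l(2) s by simp
        then show ?thesis using s \<open>\<sigma> m < n\<close> by (simp add: z_def)
      next
        case False then show ?thesis using vu(2) vu0(2) by (simp add: torus_vecs_def)
      qed
    qed
    have veq: "v = (\<lambda>i. (c / l) * v0 i)"
    proof
      fix m show "v m = (c / l) * v0 m"
      proof (cases "m < card Bv")
        case True
        have s: "\<tau> m \<in> Bv" "\<tau>i (\<tau> m) = m" using \<tau>2[OF True] by auto
        then have "\<tau> m < n" "\<tau> m \<notin> A" by (auto simp: Bv_def)
        then have "z u v (\<tau> m) = (c / l) * z u0 v0 (\<tau> m)" using l(2) by simp
        then show ?thesis using s \<open>\<tau> m < n\<close> \<open>\<tau> m \<notin> A\<close> by (simp add: z_def)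
      next
        case False then show ?thesis using vu(1) vu0(1) by (simp add: torus_vecs_def)
      qed
    qed
    have lk: "(l, c / l) \<in> ?K \<times> ?K" using l(1) c(1) by simp
    have "p = ?f (l, c / l)" using pvu ueq veq by simp
    then show "p \<in> ?f ` (?K \<times> ?K)" using lk by (rule image_eqI)
  qed
  have fK: "finite (?K \<times> ?K)" using fin by simp
  have "card (fib P) \<le> card (?f ` (?K \<times> ?K))" by (rule card_mono[OF finite_imageI[OF fK] sub])
  also have "\<dots> \<le> card (?K \<times> ?K)" by (rule card_image_le[OF fK])
  also have "\<dots> = card ?K * card ?K" by (simp add: card_cartesian_product)
  finally show ?thesis .
qed

lemma fib_union_card:
  assumes fin: "finite (UNIV::'a::field set)" and SX: "finite SX"
    and T: "T \<subseteq> (\<Union>P\<in>SX. fib P :: ((nat\<Rightarrow>'a) \<times> (nat\<Rightarrow>'a)) set)"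
  shows "card T \<le> card SX * (card {k::'a. k\<noteq>0} * card {k::'a. k\<noteq>0})"
proof -
  have fU: "finite (\<Union>P\<in>SX. fib P :: ((nat\<Rightarrow>'a) \<times> (nat\<Rightarrow>'a)) set)"
  proof (rule finite_UN_I[OF SX])
    fix P
    have "finite (torus_vecs (card Bv) \<times> torus_vecs (card A) :: ((nat\<Rightarrow>'a) \<times> (nat\<Rightarrow>'a)) set)"
      using finite_torus_vecs[OF fin] by simp
    then show "finite (fib P :: ((nat\<Rightarrow>'a) \<times> (nat\<Rightarrow>'a)) set)" using fib_sub finite_subset by blast
  qed
  have "card T \<le> card (\<Union>P\<in>SX. fib P :: ((nat\<Rightarrow>'a) \<times> (nat\<Rightarrow>'a)) set)" by (rule card_mono[OF fU T])
  also have "\<dots> \<le> (\<Sum>P\<in>SX. card (fib P :: ((nat\<Rightarrow>'a) \<times> (nat\<Rightarrow>'a)) set))" by (rule card_UN_le[OF SX])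
  also have "\<dots> \<le> (\<Sum>P\<in>SX. card {k::'a. k\<noteq>0} * card {k::'a. k\<noteq>0})" by (intro sum_mono fib_card[OF fin])
  also have "\<dots> = card SX * (card {k::'a. k\<noteq>0} * card {k::'a. k\<noteq>0})" by simp
  finally show ?thesis .
qed


lemma finite_X: "finite (UNIV::'a::field set) \<Longrightarrow> finite (edge_toric_set n E :: (nat \<Rightarrow> 'a) set set)"
  unfolding edge_toric_set_def using finite_torus_vecs by blast

lemma X_rep: "P \<in> edge_toric_set n E \<Longrightarrow> \<exists>y. P = proj_pt y \<and> y 0 \<noteq> 0"
  unfolding edge_toric_set_def using ev0 by blast

lemma Q_pos: "finite (UNIV::'a::field set) \<Longrightarrow> card {k::'a. k \<noteq> 0} > 0"
proof -
  assume fin: "finite (UNIV::'a set)"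
  have "(1::'a) \<in> {k::'a. k \<noteq> 0}" by simp
  then have "{k::'a. k \<noteq> 0} \<noteq> {}" by blast
  moreover have "finite {k::'a. k \<noteq> 0}" using fin by simp
  ultimately show ?thesis by (simp add: card_gt_0_iff)
qed

lemma cardA_pos: "card A \<ge> 1" using Ane finA by (simp add: Suc_le_eq card_gt_0_iff)
lemma cardB_pos: "card Bv \<ge> 1" using Bne finB by (simp add: Suc_le_eq card_gt_0_iff Bv_def)

lemma lower:
  fixes c :: "(nat \<Rightarrow> nat) \<Rightarrow> 'a::field"
  assumes fin: "finite (UNIV::'a set)"
    and P0: "P0 \<in> (edge_toric_set n E :: (nat \<Rightarrow> 'a) set set)" "code_val (length E) d c P0 \<noteq> 0"
  shows "min_dist (card A) d (proj_torus (card A) :: (nat\<Rightarrow>'a) set set)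
       * min_dist (card Bv) d (proj_torus (card Bv) :: (nat\<Rightarrow>'a) set set)
       \<le> card {P \<in> (edge_toric_set n E :: (nat\<Rightarrow>'a) set set). code_val (length E) d c P \<noteq> 0}"
proof -
  let ?Q = "card {k::'a. k \<noteq> 0}"
  let ?D1 = "min_dist (card A) d (proj_torus (card A) :: (nat\<Rightarrow>'a) set set)"
  let ?D2 = "min_dist (card Bv) d (proj_torus (card Bv) :: (nat\<Rightarrow>'a) set set)"
  obtain x0 where x0: "x0 \<in> torus_vecs n" "P0 = proj_pt (edge_vec E x0)"
    using P0(1) unfolding edge_toric_set_def by blast
  define u0 where "u0 m = (if m < card A then x0 (\<sigma> m) else 0)" for m
  define v0 where "v0 m = (if m < card Bv then x0 (\<tau> m) else 0)" for m
  have u0: "u0 \<in> torus_vecs (card A)"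
  proof -
    have "x0 (\<sigma> m) \<noteq> 0" if "m < card A" for m
      using \<sigma>2[OF that] A_sub x0(1) by (auto simp: torus_vecs_def)
    then show ?thesis by (simp add: torus_vecs_def u0_def)
  qed
  have v0: "v0 \<in> torus_vecs (card Bv)"
  proof -
    have "x0 (\<tau> m) \<noteq> 0" if "m < card Bv" for m
      using \<tau>2[OF that] x0(1) by (auto simp: torus_vecs_def Bv_def)
    then show ?thesis by (simp add: torus_vecs_def v0_def)
  qed
  have zx: "z u0 v0 = x0"
  proof
    fix i show "z u0 v0 i = x0 i"
    proof (cases "i < n")
      case True
      show ?thesis
      proof (cases "i \<in> A")
        case iA: True
        then show ?thesis using \<sigma>1[OF iA] True by (simp add: z_def u0_def)
      next
        case iA: False
        then have "i \<in> Bv" using True by (simp add: Bv_def)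
        then show ?thesis using \<tau>1[OF \<open>i \<in> Bv\<close>] True iA by (simp add: z_def v0_def)
      qed
    next
      case False then show ?thesis using x0(1) by (simp add: z_def torus_vecs_def)
    qed
  qed
  have G0: "G d c u0 v0 \<noteq> 0"
    using P0(2) code_nz[of "edge_vec E x0", OF ev0[OF x0(1)]] x0(2) zx by (simp add: G_def)
  define Sv where "Sv = {v \<in> torus_vecs (card Bv). G d c u0 v \<noteq> 0}"
  define Uv where "Uv v = {u \<in> torus_vecs (card A). G d c u v \<noteq> 0}" for v
  have D2: "?Q * ?D2 \<le> card Sv"
    unfolding Sv_def by (rule torus_lb[OF fin cardB_pos G_fs_v v0 G0])
  have D1: "?Q * ?D1 \<le> card (Uv v)" if "v \<in> Sv" for v
  proof -
    have "G d c u0 v \<noteq> 0" using that by (simp add: Sv_def)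
    then show ?thesis unfolding Uv_def by (rule torus_lb[OF fin cardA_pos G_fs_u u0])
  qed
  have fSv: "finite Sv" unfolding Sv_def using finite_torus_vecs[OF fin] by simp
  have fUv: "finite (Uv v)" for v unfolding Uv_def using finite_torus_vecs[OF fin] by simp
  have "card Sv * (?Q * ?D1) \<le> (\<Sum>v\<in>Sv. card (Uv v))"
    using sum_mono[of Sv "\<lambda>_. ?Q * ?D1" "\<lambda>v. card (Uv v)"] D1 by simp
  also have "\<dots> = card (SIGMA v:Sv. Uv v)" using fSv fUv by simp
  finally have L1: "card Sv * (?Q * ?D1) \<le> card (SIGMA v:Sv. Uv v)" .
  define SX where "SX = {P \<in> (edge_toric_set n E :: (nat\<Rightarrow>'a) set set). code_val (length E) d c P \<noteq> 0}"
  have fSX: "finite SX" unfolding SX_def using finite_X[OF fin] by simp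
  have cover: "(SIGMA v:Sv. Uv v) \<subseteq> (\<Union>P\<in>SX. fib P)"
  proof
    fix p assume "p \<in> (SIGMA v:Sv. Uv v)"
    then obtain v u where p: "p = (v,u)" "v \<in> torus_vecs (card Bv)" "u \<in> torus_vecs (card A)" "G d c u v \<noteq> 0"
      by (auto simp: Sv_def Uv_def)
    have zt: "z u v \<in> torus_vecs n" by (rule z_torus[OF p(3,2)])
    define P where "P = proj_pt (edge_vec E (z u v))"
    have "P \<in> edge_toric_set n E" unfolding P_def edge_toric_set_def using zt by blast
    moreover have "code_val (length E) d c P \<noteq> 0"
      unfolding P_def using code_nz[of "edge_vec E (z u v)", OF ev0[OF zt]] p(4) by (simp add: G_def)
    ultimately have "P \<in> SX" by (simp add: SX_def)
    moreover have "p \<in> fib P" using p by (simp add: fib_def P_def)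
    ultimately show "p \<in> (\<Union>P\<in>SX. fib P)" by blast
  qed
  have L2: "card (SIGMA v:Sv. Uv v) \<le> card SX * (?Q * ?Q)"
    by (rule fib_union_card[OF fin fSX cover])
  have "(?Q * ?D2) * (?Q * ?D1) \<le> card Sv * (?Q * ?D1)" using D2 by (rule mult_right_mono) simp
  also have "\<dots> \<le> card SX * (?Q * ?Q)" using L1 L2 by linarith
  also have "(?Q * ?D2) * (?Q * ?D1) = (?Q * ?Q) * (?D1 * ?D2)" by (simp add: mult_ac)
  finally have "(?Q * ?Q) * (?D1 * ?D2) \<le> (?Q * ?Q) * card SX" by (simp add: mult_ac)
  then have "?D1 * ?D2 \<le> card SX" using Q_pos[OF fin] by simp
  then show ?thesis by (simp add: SX_def)
qed


lemma tree_grow: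
  assumes w0: "w0 < n"
  shows "k < n \<Longrightarrow> \<exists>S F. w0 \<in> S \<and> S \<subseteq> {0..<n} \<and> card S = Suc k \<and> F \<subseteq> set E \<and> card F = k
      \<and> (\<forall>e\<in>F. e \<subseteq> S) \<and> (\<forall>v\<in>S. (\<lambda>x y. {x,y} \<in> F)\<^sup>*\<^sup>* w0 v)"
proof (induction k)
  case 0
  have "w0 \<in> {w0} \<and> {w0} \<subseteq> {0..<n} \<and> card {w0} = Suc 0 \<and> {} \<subseteq> set E \<and> card ({}::nat set set) = 0
      \<and> (\<forall>e\<in>{}. e \<subseteq> {w0}) \<and> (\<forall>v\<in>{w0}. (\<lambda>x y. {x,y} \<in> ({}::nat set set))\<^sup>*\<^sup>* w0 v)"
    using w0 by auto
  then show ?case by blast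
next
  case (Suc k)
  then have "k < n" by simp
  then obtain S F where IH: "w0 \<in> S" "S \<subseteq> {0..<n}" "card S = Suc k" "F \<subseteq> set E" "card F = k"
      "\<forall>e\<in>F. e \<subseteq> S" "\<forall>v\<in>S. (\<lambda>x y. {x,y} \<in> F)\<^sup>*\<^sup>* w0 v"
    using Suc.IH by blast
  have "S \<noteq> {0..<n}" using IH(3) Suc.prems by auto
  then have "\<exists>v. v < n \<and> v \<notin> S" using IH(2) by auto
  then obtain v where v: "v < n" "v \<notin> S" by blast
  have "(\<lambda>x y. {x,y} \<in> set E)\<^sup>*\<^sup>* w0 v" using conn w0 v(1) unfolding graph_connected_def by blast
  then obtain x y where xy: "{x,y} \<in> set E" "x \<in> S" "y \<notin> S"
    using crossing[of "\<lambda>x y. {x,y} \<in> set E" w0 v S] IH(1) v(2) by blast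
  obtain i j where ij: "{x,y} = {i,j}" "i < n" "j < n" using edge_AB[OF xy(1)] by blast
  have yn: "y < n" using ij by (auto simp: doubleton_eq_iff)
  have finF: "finite F" using IH(4) finite_subset by blast
  have finS: "finite S" using IH(2) finite_subset by blast
  have nF: "{x,y} \<notin> F" using IH(6) xy(3) by blast
  define S' where "S' = insert y S"
  define F' where "F' = insert {x,y} F"
  have c1: "card S' = Suc (Suc k)" using finS xy(3) IH(3) by (simp add: S'_def)
  have c2: "card F' = Suc k" using finF nF IH(5) by (simp add: F'_def)
  have r1: "(\<lambda>x y. {x,y} \<in> F')\<^sup>*\<^sup>* w0 u" if "u \<in> S" for u
  proof -
    have "(\<lambda>x y. {x,y} \<in> F)\<^sup>*\<^sup>* w0 u" using IH(7) that by blast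
    moreover have "\<And>a b. {a,b} \<in> F \<longrightarrow> {a,b} \<in> F'" by (simp add: F'_def)
    ultimately show ?thesis using mono_rtranclp[of "\<lambda>x y. {x,y} \<in> F" "\<lambda>x y. {x,y} \<in> F'"] by blast
  qed
  have r2: "(\<lambda>x y. {x,y} \<in> F')\<^sup>*\<^sup>* w0 y"
  proof -
    have "(\<lambda>x y. {x,y} \<in> F')\<^sup>*\<^sup>* w0 x" using r1 xy(2) by blast
    moreover have "{x,y} \<in> F'" by (simp add: F'_def)
    ultimately show ?thesis by (rule rtranclp.rtrancl_into_rtrancl)
  qed
  have "w0 \<in> S' \<and> S' \<subseteq> {0..<n} \<and> card S' = Suc (Suc k) \<and> F' \<subseteq> set E \<and> card F' = Suc k
      \<and> (\<forall>e\<in>F'. e \<subseteq> S') \<and> (\<forall>v\<in>S'. (\<lambda>x y. {x,y} \<in> F')\<^sup>*\<^sup>* w0 v)"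
    using IH xy yn c1 c2 r1 r2 unfolding S'_def F'_def by auto
  then show ?case by blast
qed

lemma n_eq: "n = card A + card Bv"
proof -
  have "card Bv = n - card A" unfolding Bv_def using card_Diff_subset[OF finA A_sub] by simp
  moreover have "card A \<le> n" using card_mono[OF _ A_sub] by simp
  ultimately show ?thesis by simp
qed

lemma spanning:
  assumes w0: "w0 \<in> A"
  shows "\<exists>F. F \<subseteq> set E \<and> card F = n - 1 \<and> (\<forall>v<n. (\<lambda>x y. {x,y} \<in> F)\<^sup>*\<^sup>* w0 v)"
proof -
  have w0n: "w0 < n" using w0 A_sub by auto
  then obtain S F where SF: "w0 \<in> S" "S \<subseteq> {0..<n}" "card S = Suc (n - 1)" "F \<subseteq> set E" "card F = n - 1"
      "\<forall>v\<in>S. (\<lambda>x y. {x,y} \<in> F)\<^sup>*\<^sup>* w0 v"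
    using tree_grow[OF w0n, of "n - 1"] by auto
  have "card S = card {0..<n}" using SF(3) w0n by simp
  then have "S = {0..<n}" using card_subset_eq[OF _ SF(2)] by simp
  then show ?thesis using SF by auto
qed


lemma upper:
  assumes fin: "finite (UNIV::'a::field set)"
  shows "min_dist (length E) d (edge_toric_set n E :: (nat \<Rightarrow> 'a) set set)
         \<le> min_dist (n - 1) d (proj_torus (n - 1) :: (nat \<Rightarrow> 'a) set set)"
proof -
  let ?Q = "card {k::'a. k \<noteq> 0}"
  let ?X = "edge_toric_set n E :: (nat \<Rightarrow> 'a) set set"
  define N3 where "N3 = n - 1"
  let ?X3 = "proj_torus N3 :: (nat \<Rightarrow> 'a) set set"
  have nab: "n = card A + card Bv" by (rule n_eq)
  have N3: "N3 \<ge> 1" unfolding N3_def using nab cardA_pos cardB_pos by simp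
  obtain w0 where w0: "w0 \<in> A" using Ane by blast
  obtain F where F: "F \<subseteq> set E" "card F = N3" "\<And>v. v < n \<Longrightarrow> (\<lambda>x y. {x,y} \<in> F)\<^sup>*\<^sup>* w0 v"
    using spanning[OF w0] unfolding N3_def by blast
  have finF: "finite F" using F(1) finite_subset by blast
  obtain xs where xs: "set xs = F" "distinct xs" using finite_distinct_list[OF finF] by blast
  have lxs: "length xs = N3" using distinct_card[OF xs(2)] xs(1) F(2) by simp
  define L where "L = map (\<lambda>e. SOME k. k < length E \<and> E!k = e) xs"
  have L: "L!j < length E" "E!(L!j) = xs!j" if "j < N3" for j
  proof -
    have "xs!j \<in> set E" using that lxs xs(1) F(1) nth_mem by blast
    then have "\<exists>k. k < length E \<and> E!k = xs!j" unfolding in_set_conv_nth by blast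
    then have "(SOME k. k < length E \<and> E!k = xs!j) < length E \<and> E!(SOME k. k < length E \<and> E!k = xs!j) = xs!j"
      by (rule someI_ex)
    moreover have "L!j = (SOME k. k < length E \<and> E!k = xs!j)" unfolding L_def using that lxs by simp
    ultimately show "L!j < length E" "E!(L!j) = xs!j" by simp_all
  qed
  define \<rho> where "\<rho> y = (\<lambda>j. if j < N3 then y (L!j) else 0)" for y :: "nat \<Rightarrow> 'a"
  have \<rho>_scale: "\<rho> (\<lambda>i. k * y i) = (\<lambda>j. k * \<rho> y j)" for k y by (rule ext) (simp add: \<rho>_def)
  define \<pi> where "\<pi> P = proj_pt (\<rho> (SOME y. y \<in> P))" for P :: "(nat \<Rightarrow> 'a) set"
  have \<pi>_pt: "\<pi> (proj_pt y) = proj_pt (\<rho> y)" for y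
  proof -
    have "(SOME y'. y' \<in> proj_pt y) \<in> proj_pt y" by (rule someI[where x=y]) (rule proj_pt_self)
    then obtain k where k: "k \<noteq> 0" "(SOME y'. y' \<in> proj_pt y) = (\<lambda>i. k * y i)" unfolding proj_pt_iff by blast
    show ?thesis unfolding \<pi>_def k(2) \<rho>_scale using proj_pt_scale[OF k(1)] by simp
  qed
  have \<rho>_torus: "\<rho> (edge_vec E x) \<in> torus_vecs N3" if "x \<in> torus_vecs n" for x
    using ev_nz[OF that] L(1) unfolding torus_vecs_def \<rho>_def by simp
  have \<rho>_ev: "\<rho> (edge_vec E x) j = (\<Prod>i\<in>xs!j. x i)" if "j < N3" for x j
    using that L[OF that] unfolding \<rho>_def edge_vec_def by simp
  have finX: "finite ?X" by (rule finite_X[OF fin])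
  have finX3: "finite ?X3" by (rule finite_proj_torus[OF fin])
  have piX: "\<pi> ` ?X \<subseteq> ?X3"
  proof
    fix Q assume "Q \<in> \<pi> ` ?X"
    then obtain x where x: "x \<in> torus_vecs n" "Q = \<pi> (proj_pt (edge_vec E x))"
      unfolding edge_toric_set_def by blast
    then show "Q \<in> ?X3" using \<pi>_pt \<rho>_torus[OF x(1)] by (simp add: proj_torus_def)
  qed
  have inj: "inj_on \<pi> ?X"
  proof (rule inj_onI)
    fix P1 P2 assume P1: "P1 \<in> ?X" and P2: "P2 \<in> ?X" and eq: "\<pi> P1 = \<pi> P2"
    obtain x1 where x1: "x1 \<in> torus_vecs n" "P1 = proj_pt (edge_vec E x1)" using P1 unfolding edge_toric_set_def by blast
    obtain x2 where x2: "x2 \<in> torus_vecs n" "P2 = proj_pt (edge_vec E x2)" using P2 unfolding edge_toric_set_def by blast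
    have "proj_pt (\<rho> (edge_vec E x1)) = proj_pt (\<rho> (edge_vec E x2))" using eq x1(2) x2(2) \<pi>_pt by simp
    moreover have "\<rho> (edge_vec E x1) \<in> proj_pt (\<rho> (edge_vec E x1))" by (rule proj_pt_self)
    ultimately have "\<rho> (edge_vec E x1) \<in> proj_pt (\<rho> (edge_vec E x2))" by simp
    then obtain c where c: "c \<noteq> 0" "\<rho> (edge_vec E x1) = (\<lambda>j. c * \<rho> (edge_vec E x2) j)"
      unfolding proj_pt_iff by blast
    have h: "(\<Prod>i\<in>e. x1 i) = c * (\<Prod>i\<in>e. x2 i)" if "e \<in> F" for e
    proof -
      have "e \<in> set xs" using that xs(1) by simp
      then have "\<exists>j<length xs. xs!j = e" unfolding in_set_conv_nth by blast
      then obtain j where j: "j < N3" "xs!j = e" using lxs by auto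
      have "\<rho> (edge_vec E x1) j = c * \<rho> (edge_vec E x2) j" by (subst c(2)) (rule refl)
      then show ?thesis unfolding \<rho>_ev[OF j(1)] j(2) .
    qed
    obtain l where l: "l \<noteq> 0" "\<forall>i<n. x1 i = (if i \<in> A then l else c / l) * x2 i"
      using scale_conn[OF x1(1) x2(1) F(1) w0 F(3) c(1) h] by blast
    have "edge_vec E x1 = (\<lambda>k. c * edge_vec E x2 k)" by (rule edges_scale[OF l])
    then show "P1 = P2" using x1(2) x2(2) proj_pt_scale[OF c(1)] by simp
  qed
  have cX: "card ?X \<le> card ?X3" by (rule card_inj_on_le[OF inj piX finX3])
  have cX3: "card ?X3 \<le> card ?X"
  proof -
    have cover: "torus_vecs (card Bv) \<times> torus_vecs (card A) \<subseteq> (\<Union>P\<in>?X. fib P)"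
    proof
      fix p assume "p \<in> (torus_vecs (card Bv) \<times> torus_vecs (card A) :: ((nat\<Rightarrow>'a) \<times> (nat\<Rightarrow>'a)) set)"
      then obtain v u where p: "p = (v,u)" "v \<in> torus_vecs (card Bv)" "u \<in> (torus_vecs (card A) :: (nat\<Rightarrow>'a) set)"
        by blast
      have zt: "z u v \<in> torus_vecs n" by (rule z_torus[OF p(3,2)])
      have "proj_pt (edge_vec E (z u v)) \<in> ?X" unfolding edge_toric_set_def using zt by blast
      moreover have "p \<in> fib (proj_pt (edge_vec E (z u v)))" using p by (simp add: fib_def)
      ultimately show "p \<in> (\<Union>P\<in>?X. fib P)" by blast
    qed
    have "card (torus_vecs (card Bv) \<times> torus_vecs (card A) :: ((nat\<Rightarrow>'a) \<times> (nat\<Rightarrow>'a)) set)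
        \<le> card ?X * (?Q * ?Q)" by (rule fib_union_card[OF fin finX cover])
    then have "?Q ^ card Bv * ?Q ^ card A \<le> card ?X * (?Q * ?Q)"
      by (simp add: card_cartesian_product card_torus_vecs[OF fin])
    moreover have "?Q ^ card Bv * ?Q ^ card A = ?Q ^ N3 * ?Q"
    proof -
      have "card Bv + card A = Suc N3" using nab N3 unfolding N3_def by simp
      then show ?thesis by (simp add: power_add[symmetric])
    qed
    ultimately have A1: "?Q ^ N3 * ?Q \<le> card ?X * (?Q * ?Q)" by simp
    have e3: "card ?X3 * ?Q = ?Q ^ N3" using card_proj_torus[OF fin N3] by (simp add: mult.commute)
    have "(card ?X3 * ?Q) * ?Q \<le> (card ?X * ?Q) * ?Q" using A1 unfolding e3 by (simp add: mult.assoc)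
    then have "card ?X3 * ?Q \<le> card ?X * ?Q" using Q_pos[OF fin] by simp
    then show ?thesis using Q_pos[OF fin] by simp
  qed
  have surj: "\<pi> ` ?X = ?X3"
  proof (rule card_subset_eq[OF finX3 piX])
    show "card (\<pi> ` ?X) = card ?X3" using card_image[OF inj] cX cX3 by simp
  qed
  define one where "one = (\<lambda>i::nat. if i < N3 then (1::'a) else 0)"
  have "one \<in> torus_vecs N3" by (simp add: one_def torus_vecs_def)
  then have X3ne: "?X3 \<noteq> {}" by (auto simp: proj_torus_def)
  have X3rep: "\<exists>y. P = proj_pt y \<and> y 0 \<noteq> 0" if "P \<in> ?X3" for P
    using that N3 unfolding proj_torus_def torus_vecs_def by auto
  obtain c3 where c3: "\<exists>P\<in>?X3. code_val N3 d c3 P \<noteq> 0"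
      "min_dist N3 d ?X3 = card {P \<in> ?X3. code_val N3 d c3 P \<noteq> 0}"
    using md_in[OF finX3 wset_nonempty[OF N3 X3ne X3rep]] by blast
  have "(\<lambda>w. eval_form N3 d c3 (\<rho> w)) = (\<lambda>w. \<Sum>\<alpha>\<in>mono_exps N3 d. c3 \<alpha> * (\<Prod>j<N3. w (L!j) ^ \<alpha> j))"
    unfolding eval_form_def \<rho>_def by (intro ext sum.cong refl arg_cong2[where f="(*)"] prod.cong) auto
  also have "\<dots> \<in> fs (length E) d"
    by (intro fs_sum finite_mono_exps fs_smult fs_subst L(1))
  finally obtain c where c: "\<forall>w. eval_form N3 d c3 (\<rho> w) = eval_form (length E) d c w"
    unfolding fs_def by blast
  have codeq: "code_val (length E) d c P \<noteq> 0 \<longleftrightarrow> code_val N3 d c3 (\<pi> P) \<noteq> 0" if PX: "P \<in> ?X" for P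
  proof -
    obtain x where x: "x \<in> torus_vecs n" "P = proj_pt (edge_vec E x)" using PX unfolding edge_toric_set_def by blast
    have r0: "\<rho> (edge_vec E x) 0 \<noteq> 0" using \<rho>_torus[OF x(1)] N3 by (simp add: torus_vecs_def)
    have "code_val (length E) d c P \<noteq> 0 \<longleftrightarrow> eval_form (length E) d c (edge_vec E x) \<noteq> 0"
      unfolding x(2) by (rule code_nz[of "edge_vec E x", OF ev0[OF x(1)]])
    also have "\<dots> \<longleftrightarrow> eval_form N3 d c3 (\<rho> (edge_vec E x)) \<noteq> 0" using c by simp
    also have "\<dots> \<longleftrightarrow> code_val N3 d c3 (proj_pt (\<rho> (edge_vec E x))) \<noteq> 0"
      by (rule code_nz[of "\<rho> (edge_vec E x)", OF r0, symmetric])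
    also have "proj_pt (\<rho> (edge_vec E x)) = \<pi> P" using x(2) \<pi>_pt by simp
    finally show ?thesis .
  qed
  obtain P3 where P3: "P3 \<in> ?X3" "code_val N3 d c3 P3 \<noteq> 0" using c3(1) by blast
  then obtain P where P: "P \<in> ?X" "\<pi> P = P3" using surj by (metis imageE)
  have Pnz: "code_val (length E) d c P \<noteq> 0" using codeq[OF P(1)] P(2) P3(2) by simp
  have "min_dist (length E) d ?X \<le> card {P \<in> ?X. code_val (length E) d c P \<noteq> 0}"
    by (rule md_le[OF finX P(1) Pnz])
  also have "\<dots> \<le> card {P \<in> ?X3. code_val N3 d c3 P \<noteq> 0}"
  proof (rule card_inj_on_le)
    show "inj_on \<pi> {P \<in> ?X. code_val (length E) d c P \<noteq> 0}" using inj by (rule inj_on_subset) auto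
    show "\<pi> ` {P \<in> ?X. code_val (length E) d c P \<noteq> 0} \<subseteq> {P \<in> ?X3. code_val N3 d c3 P \<noteq> 0}"
      using piX codeq by auto
    show "finite {P \<in> ?X3. code_val N3 d c3 P \<noteq> 0}" using finX3 by simp
  qed
  also have "\<dots> = min_dist N3 d ?X3" using c3(2) by simp
  finally show ?thesis unfolding N3_def .
qed


lemma X_ne: "(edge_toric_set n E :: (nat \<Rightarrow> 'a::field) set set) \<noteq> {}"
proof -
  have "(\<lambda>i::nat. if i < n then (1::'a) else 0) \<in> torus_vecs n" by (simp add: torus_vecs_def)
  then show ?thesis unfolding edge_toric_set_def by blast
qed

lemma lower_md:
  assumes fin: "finite (UNIV::'a::field set)"
  shows "min_dist (card A) d (proj_torus (card A) :: (nat\<Rightarrow>'a) set set)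
       * min_dist (card Bv) d (proj_torus (card Bv) :: (nat\<Rightarrow>'a) set set)
       \<le> min_dist (length E) d (edge_toric_set n E :: (nat\<Rightarrow>'a) set set)"
proof (rule md_ge[OF finite_X[OF fin] wset_nonempty[OF E_ne X_ne X_rep]])
  fix c :: "(nat \<Rightarrow> nat) \<Rightarrow> 'a"
  assume "\<exists>P\<in>(edge_toric_set n E :: (nat\<Rightarrow>'a) set set). code_val (length E) d c P \<noteq> 0"
  then obtain P0 where "P0 \<in> (edge_toric_set n E :: (nat\<Rightarrow>'a) set set)" "code_val (length E) d c P0 \<noteq> 0" by blast
  then show "min_dist (card A) d (proj_torus (card A) :: (nat\<Rightarrow>'a) set set)
       * min_dist (card Bv) d (proj_torus (card Bv) :: (nat\<Rightarrow>'a) set set)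
       \<le> card {P \<in> (edge_toric_set n E :: (nat\<Rightarrow>'a) set set). code_val (length E) d c P \<noteq> 0}"
    by (rule lower[OF fin])
qed
end


theorem theorem4p4:
  fixes n a b d :: nat and E :: "nat set list" and A :: "nat set"
  assumes "finite (UNIV :: 'a::field set)"
    and "simple_graph n E" and "graph_connected n E"
    and "bipartition n E A" and "card A = a" and "card ({0..<n} - A) = b"
    and "a \<ge> 1" and "b \<ge> 1" and "d \<ge> 1"
  shows "min_dist a d (proj_torus a :: (nat \<Rightarrow> 'a) set set)
           * min_dist b d (proj_torus b :: (nat \<Rightarrow> 'a) set set)
         \<le> min_dist (length E) d (edge_toric_set n E :: (nat \<Rightarrow> 'a) set set)
       \<and> min_dist (length E) d (edge_toric_set n E :: (nat \<Rightarrow> 'a) set set)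
         \<le> min_dist (a + b - 1) d (proj_torus (a + b - 1) :: (nat \<Rightarrow> 'a) set set)"
proof -
  have Ane: "A \<noteq> {}" using assms(5,7) by auto
  have Bne: "{0..<n} - A \<noteq> {}"
  proof
    assume "{0..<n} - A = {}"
    then have "card ({0..<n} - A) = 0" by simp
    then show False using assms(6,8) by simp
  qed
  interpret bip n E A using assms(2,3,4) Ane Bne by unfold_locales
  have cB: "card Bv = b" using assms(6) by (simp add: Bv_def)
  have nab: "n - 1 = a + b - 1" using n_eq assms(5) cB by simp
  show ?thesis
    using lower_md[OF assms(1), of d] upper[OF assms(1), of d] assms(5) cB nab by simp
qed

end
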